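(* Let $n \geq 2$, $N = \frac{n(n+1)}{2}$, and identify $\mathbb{C}^N$ with arrays $v = (v_{r,s})_{1 \leq s \leq r \leq n}$ of complex numbers. Let $\mathbb{C}^N_{\mathrm{std}}$ be the set of standard points and $\mathbb{Z}^N_0$ the set of integral vectors whose row-$n$ entries vanish (see context). Let $W \subset \mathbb{Z}^N_0$ be a nonempty finite set and put $$S_W = \bigcap_{w \in W} \left(\mathbb{C}^N_{\mathrm{std}} - w\right), \qquad \text{where } \mathbb{C}^N_{\mathrm{std}} - w = \{v - w \mid v \in \mathbb{C}^N_{\mathrm{std}}\}.$$ Let $F \in \mathbb{C}(\lambda_{r,s} \mid 1 \leq s \leq r \leq n)$ be a rational function that has no poles in $S_W$. If $F(v) = 0$ for all $v \in S_W$, then $F = 0$.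
   Context: Coordinates on $\mathbb{C}^N$ are the variables $\lambda_{r,s}$, $1 \leq s \leq r \leq n$, so that $\lambda_{r,s}(v) = v_{r,s}$; rational functions on $\mathbb{C}^N$ are elements of the field $\mathbb{C}(\lambda_{r,s} \mid 1 \leq s \leq r \leq n)$. A point $v \in \mathbb{C}^N$ is called standard if for all $1 \leq i < k \leq n$ one has $v_{k,i} - v_{k-1,i} \in \mathbb{Z}_{\geq 0}$ and $v_{k-1,i} - v_{k,i+1} \in \mathbb{Z}_{>0}$; $\mathbb{C}^N_{\mathrm{std}}$ denotes the set of standard points. $\mathbb{Z}^N_0$ denotes the set of $z \in \mathbb{Z}^N$ with $z_{n,s} = 0$ for all $1 \leq s \leq n$. *)

theory Defs
  imports "HOL-Analysis.Analysis" "HOL-Library.Poly_Mapping"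
begin

definition idx :: "nat \<Rightarrow> (nat \<times> nat) set" where
  "idx n = {(r, s). 1 \<le> s \<and> s \<le> r \<and> r \<le> n}"

text \<open>Points of C^N: arrays indexed by idx n (zero outside the index set).\<close>
definition pts :: "nat \<Rightarrow> (nat \<times> nat \<Rightarrow> complex) set" where
  "pts n = {v. \<forall>p. p \<notin> idx n \<longrightarrow> v p = 0}"

definition std_pts :: "nat \<Rightarrow> (nat \<times> nat \<Rightarrow> complex) set" where
  "std_pts n = {v \<in> pts n. \<forall>i k. 1 \<le> i \<and> i < k \<and> k \<le> n \<longrightarrow>
      (\<exists>m::nat. v (k, i) - v (k - 1, i) = of_nat m) \<and>
      (\<exists>m::nat. 0 < m \<and> v (k - 1, i) - v (k, i + 1) = of_nat m)}"

definition Z0 :: "nat \<Rightarrow> (nat \<times> nat \<Rightarrow> int) set" where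
  "Z0 n = {z. (\<forall>p. p \<notin> idx n \<longrightarrow> z p = 0) \<and> (\<forall>s. z (n, s) = 0)}"

definition std_shift :: "nat \<Rightarrow> (nat \<times> nat \<Rightarrow> int) \<Rightarrow> (nat \<times> nat \<Rightarrow> complex) set" where
  "std_shift n w = (\<lambda>v. (\<lambda>p. v p - of_int (w p))) ` std_pts n"

definition S_W :: "nat \<Rightarrow> (nat \<times> nat \<Rightarrow> int) set \<Rightarrow> (nat \<times> nat \<Rightarrow> complex) set" where
  "S_W n W = (\<Inter>w\<in>W. std_shift n w)"

text \<open>Multivariate polynomials over C in the variables lambda_{r,s}: finitely supported
  maps from monomials (exponent vectors) to coefficients; multiplication is the
  library's convolution product.\<close>
type_synonym mpoly = "((nat \<times> nat) \<Rightarrow>\<^sub>0 nat) \<Rightarrow>\<^sub>0 complex"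

definition mpoly_in_vars :: "nat \<Rightarrow> mpoly \<Rightarrow> bool" where
  "mpoly_in_vars n P = (\<forall>m \<in> Poly_Mapping.keys P. Poly_Mapping.keys m \<subseteq> idx n)"

definition mpeval :: "mpoly \<Rightarrow> (nat \<times> nat \<Rightarrow> complex) \<Rightarrow> complex" where
  "mpeval P v = (\<Sum>m \<in> Poly_Mapping.keys P.
      Poly_Mapping.lookup P m * (\<Prod>i \<in> Poly_Mapping.keys m. v i ^ Poly_Mapping.lookup m i))"

text \<open>A rational function is represented by a fraction P/Q with Q \<noteq> 0; two fractions
  represent the same rational function iff P*Q' = P'*Q.  F = P/Q has no pole at v iff
  it admits a representation P'/Q' with Q'(v) \<noteq> 0; then F(v) = P'(v)/Q'(v).\<close>
definition same_ratfun :: "mpoly \<Rightarrow> mpoly \<Rightarrow> mpoly \<Rightarrow> mpoly \<Rightarrow> bool" where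
  "same_ratfun P Q P' Q' = (Q' \<noteq> 0 \<and> P * Q' = P' * Q)"

definition no_pole_at :: "nat \<Rightarrow> mpoly \<Rightarrow> mpoly \<Rightarrow> (nat \<times> nat \<Rightarrow> complex) \<Rightarrow> bool" where
  "no_pole_at n P Q v = (\<exists>P' Q'. mpoly_in_vars n P' \<and> mpoly_in_vars n Q' \<and>
      same_ratfun P Q P' Q' \<and> mpeval Q' v \<noteq> 0)"

definition ratfun_val_zero :: "nat \<Rightarrow> mpoly \<Rightarrow> mpoly \<Rightarrow> (nat \<times> nat \<Rightarrow> complex) \<Rightarrow> bool" where
  "ratfun_val_zero n P Q v = (\<exists>P' Q'. mpoly_in_vars n P' \<and> mpoly_in_vars n Q' \<and>
      same_ratfun P Q P' Q' \<and> mpeval Q' v \<noteq> 0 \<and> mpeval P' v = 0)"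

end

theory Submission
  imports Defs "HOL-Computational_Algebra.Polynomial"
begin

definition Xm :: "((nat \<times> nat) \<Rightarrow>\<^sub>0 nat) \<Rightarrow> (nat \<times> nat \<Rightarrow> complex) \<Rightarrow> complex" where
  "Xm m v = (\<Prod>i \<in> Poly_Mapping.keys m. v i ^ Poly_Mapping.lookup m i)"

lemma Xm_gen: "finite S \<Longrightarrow> Poly_Mapping.keys m \<subseteq> S \<Longrightarrow>
   Xm m v = (\<Prod>i \<in> S. v i ^ Poly_Mapping.lookup m i)"
  unfolding Xm_def
  by (rule prod.mono_neutral_left) (auto simp: in_keys_iff)

lemma Xm_add: "Xm (m + m') v = Xm m v * Xm m' v"
proof -
  let ?S = "Poly_Mapping.keys m \<union> Poly_Mapping.keys m'"
  have "Xm (m + m') v = (\<Prod>i \<in> ?S. v i ^ Poly_Mapping.lookup (m+m') i)"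
    by (rule Xm_gen) (auto simp: in_keys_iff lookup_add)
  also have "\<dots> = (\<Prod>i \<in> ?S. v i ^ Poly_Mapping.lookup m i) * (\<Prod>i \<in> ?S. v i ^ Poly_Mapping.lookup m' i)"
    by (simp add: lookup_add power_add prod.distrib)
  also have "\<dots> = Xm m v * Xm m' v"
    using Xm_gen[of ?S m v] Xm_gen[of ?S m' v] by simp
  finally show ?thesis .
qed

lemma mpeval_gen: "finite S \<Longrightarrow> Poly_Mapping.keys P \<subseteq> S \<Longrightarrow>
   mpeval P v = (\<Sum>m \<in> S. Poly_Mapping.lookup P m * Xm m v)"
  unfolding mpeval_def Xm_def[symmetric]
  by (rule sum.mono_neutral_left) (auto simp: in_keys_iff)

lemma mpeval_add: "mpeval (P + Q) v = mpeval P v + mpeval Q v"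
proof -
  let ?S = "Poly_Mapping.keys P \<union> Poly_Mapping.keys Q"
  have "mpeval (P + Q) v = (\<Sum>m \<in> ?S. Poly_Mapping.lookup (P+Q) m * Xm m v)"
    by (rule mpeval_gen) (auto simp: in_keys_iff lookup_add)
  also have "\<dots> = (\<Sum>m \<in> ?S. Poly_Mapping.lookup P m * Xm m v) + (\<Sum>m \<in> ?S. Poly_Mapping.lookup Q m * Xm m v)"
    by (simp add: lookup_add distrib_right sum.distrib)
  also have "\<dots> = mpeval P v + mpeval Q v"
    using mpeval_gen[of ?S P v] mpeval_gen[of ?S Q v] by simp
  finally show ?thesis .
qed

lemma mpeval_zero: "mpeval 0 v = 0"
  by (simp add: mpeval_def)

lemma mpeval_sum: "finite A \<Longrightarrow> mpeval (\<Sum>a\<in>A. f a) v = (\<Sum>a\<in>A. mpeval (f a) v)"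
  by (induction A rule: finite_induct) (auto simp: mpeval_zero mpeval_add)

lemma mpeval_single: "mpeval (Poly_Mapping.single m c) v = c * Xm m v"
  by (simp add: mpeval_def Xm_def)

lemma mp_expand: "(P::mpoly) = (\<Sum>m \<in> Poly_Mapping.keys P. Poly_Mapping.single m (Poly_Mapping.lookup P m))"
  by (rule poly_mapping_eqI) (simp add: lookup_sum lookup_single when_def in_keys_iff)

lemma mpeval_mult: "mpeval ((P::mpoly) * Q) v = mpeval P v * mpeval Q v"
proof -
  let ?A = "Poly_Mapping.keys P" and ?B = "Poly_Mapping.keys Q"
  have "P * Q = (\<Sum>m \<in> ?A. Poly_Mapping.single m (Poly_Mapping.lookup P m)) *
      (\<Sum>m \<in> ?B. Poly_Mapping.single m (Poly_Mapping.lookup Q m))"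
    using mp_expand[of P] mp_expand[of Q] by simp
  also have "\<dots> = (\<Sum>m \<in> ?A. \<Sum>m' \<in> ?B. Poly_Mapping.single (m+m') (Poly_Mapping.lookup P m * Poly_Mapping.lookup Q m'))"
    by (simp add: sum_product mult_single)
  finally have "mpeval (P*Q) v = (\<Sum>m \<in> ?A. \<Sum>m' \<in> ?B. (Poly_Mapping.lookup P m * Poly_Mapping.lookup Q m') * Xm (m+m') v)"
    by (simp add: mpeval_sum mpeval_single)
  also have "\<dots> = (\<Sum>m \<in> ?A. Poly_Mapping.lookup P m * Xm m v) * (\<Sum>m' \<in> ?B. Poly_Mapping.lookup Q m' * Xm m' v)"
    by (simp add: sum_product Xm_add mult_ac)
  also have "\<dots> = mpeval P v * mpeval Q v"
    by (simp add: mpeval_def Xm_def)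
  finally show ?thesis .
qed


lemma digits_unique:
  fixes f g :: "nat \<Rightarrow> nat"
  shows "(\<forall>j<K. f j < D) \<Longrightarrow> (\<forall>j<K. g j < D) \<Longrightarrow>
    (\<Sum>j<K. f j * D^j) = (\<Sum>j<K. g j * D^j) \<Longrightarrow> j < K \<Longrightarrow> f j = g j"
proof (induction K arbitrary: f g j)
  case 0
  then show ?case by simp
next
  case (Suc K)
  have ef: "(\<Sum>j<Suc K. f j * D^j) = f 0 + D * (\<Sum>j<K. f (Suc j) * D^j)"
    unfolding sum.lessThan_Suc_shift by (simp add: sum_distrib_left mult_ac)
  have eg: "(\<Sum>j<Suc K. g j * D^j) = g 0 + D * (\<Sum>j<K. g (Suc j) * D^j)"
    unfolding sum.lessThan_Suc_shift by (simp add: sum_distrib_left mult_ac)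
  have f0: "f 0 < D" "g 0 < D" using Suc.prems by auto
  have "(f 0 + D * (\<Sum>j<K. f (Suc j) * D^j)) mod D = (g 0 + D * (\<Sum>j<K. g (Suc j) * D^j)) mod D"
    using Suc.prems(3) ef eg by simp
  hence h0: "f 0 = g 0" using f0 by simp
  hence "D * (\<Sum>j<K. f (Suc j) * D^j) = D * (\<Sum>j<K. g (Suc j) * D^j)"
    using Suc.prems(3) ef eg by simp
  hence hs: "(\<Sum>j<K. f (Suc j) * D^j) = (\<Sum>j<K. g (Suc j) * D^j)"
    using f0 by simp
  show ?case
  proof (cases j)
    case 0 then show ?thesis using h0 by simp
  next
    case (Suc j')
    then show ?thesis
      using Suc.IH[of "\<lambda>j. f (Suc j)" "\<lambda>j. g (Suc j)" j'] Suc.prems hs by auto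
  qed
qed

lemma pos_diff:
  fixes t e1 e2 :: nat and x y B :: int
  assumes "e1 < e2" "int t \<ge> 2*B + 2" "\<bar>x\<bar> \<le> B" "\<bar>y\<bar> \<le> B"
  shows "int (t^e2) - int (t^e1) + x - y > 0"
proof -
  have t1: "t \<ge> 1" using assms by auto
  have "t^e2 \<ge> t^(Suc e1)" using assms t1 by (intro power_increasing) auto
  moreover have "t^e1 \<ge> 1" using t1 by simp
  moreover have "t^(Suc e1) = t * t^e1" by simp
  ultimately have "int (t^e2) \<ge> int t * int (t^e1)" by (metis of_nat_le_iff of_nat_mult)
  moreover have "int t * int (t^e1) \<ge> int t + int (t^e1) - 1"
  proof -
    have "(int t - 1) * (int (t^e1) - 1) \<ge> 0" using t1 \<open>t^e1 \<ge> 1\<close> by simp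
    thus ?thesis by (simp add: algebra_simps)
  qed
  ultimately show ?thesis using assms by linarith
qed

lemma cplx_diff:
  fixes t e1 e2 :: nat and x y :: int
  assumes "int (t^e2) - int (t^e1) + x - y > 0"
  shows "\<exists>m::nat. 0 < m \<and> (of_nat (t^e2) + of_int x) - (of_nat (t^e1) + of_int y) = (of_nat m :: complex)"
proof (intro exI conjI)
  let ?z = "int (t^e2) - int (t^e1) + x - y"
  show "0 < nat ?z" using assms by simp
  have "(of_nat (t^e2) + of_int x) - (of_nat (t^e1) + of_int y) = (of_int ?z :: complex)" by simp
  also have "\<dots> = of_nat (nat ?z)" using assms by simp
  finally show "(of_nat (t^e2) + of_int x) - (of_nat (t^e1) + of_int y) = (of_nat (nat ?z) :: complex)" .
qed

lemma finite_idx: "finite (idx n)"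
  by (rule finite_subset[of _ "{0..n} \<times> {0..n}"]) (auto simp: idx_def)

definition rho :: "nat \<Rightarrow> nat \<times> nat \<Rightarrow> nat" where
  "rho n p = (fst p + 2*n - 2 * (snd p)) * (n+1) + fst p"

lemma rho_inj: "inj_on (rho n) (idx n)"
proof (rule inj_onI)
  fix p q assume p: "p \<in> idx n" and q: "q \<in> idx n" and e: "rho n p = rho n q"
  obtain r s where ps: "p = (r,s)" by force
  obtain r' s' where qs: "q = (r',s')" by force
  have b: "r \<le> n" "r' \<le> n" "s \<le> r" "s' \<le> r'" using p q ps qs by (auto simp: idx_def)
  have mm: "(c*(m::nat) + x) mod m = x mod m" for c m x by simp
  have "rho n p mod (n+1) = r mod (n+1)" unfolding rho_def ps fst_conv snd_conv by (rule mm)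
  moreover have "rho n q mod (n+1) = r' mod (n+1)" unfolding rho_def qs fst_conv snd_conv by (rule mm)
  moreover have "r mod (n+1) = r" "r' mod (n+1) = r'" using b by auto
  ultimately have rr: "r = r'" using e by simp
  hence "(r + 2*n - 2 * s) * (n+1) = (r + 2*n - 2 * s') * (n+1)" using e by (simp add: rho_def ps qs)
  hence "r + 2*n - 2 * s = r + 2*n - 2 * s'" using mult_right_cancel[of "n+1"] by (metis add_eq_0_iff_both_eq_0 one_neq_zero)
  hence "s = s'" using b rr by simp
  thus "p = q" using rr ps qs by simp
qed

lemma rho_ord1:
  assumes "1 \<le> i" "i < k" "k \<le> n"
  shows "rho n (k-1, i) < rho n (k, i)"
proof -
  obtain a where a: "a = k - 1 + 2*n - 2*i" by simp
  have e1: "k + 2*n - 2*i = a + 1" using assms a by simp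
  have e2: "k - 1 + 2*n - 2*i = a" using a by simp
  have d: "(a+1)*(n+1) = a*(n+1) + (n+1)" by simp
  show ?thesis unfolding rho_def fst_conv snd_conv e1 e2 using d assms by linarith
qed

lemma rho_ord2:
  assumes "1 \<le> i" "i < k" "k \<le> n"
  shows "rho n (k, i+1) < rho n (k-1, i)"
proof -
  obtain b where b: "b = k + 2*n - 2*(i+1)" by simp
  have e1: "k - 1 + 2*n - 2*i = b + 1" using assms b by simp
  have e2: "k + 2*n - 2*(i+1) = b" using b by simp
  have d: "(b+1)*(n+1) = b*(n+1) + (n+1)" by simp
  show ?thesis unfolding rho_def fst_conv snd_conv e1 e2 using d assms by linarith
qed


lemma dense:
  fixes P :: mpoly
  assumes W: "W \<subseteq> Z0 n" "finite W"
    and vars: "mpoly_in_vars n P"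
    and zero: "\<forall>v \<in> S_W n W. mpeval P v = 0"
  shows "P = 0"
proof -
  define D where "D = 2 + (\<Sum>m\<in>Poly_Mapping.keys P. \<Sum>i\<in>Poly_Mapping.keys m. Poly_Mapping.lookup m i)"
  define e where "e p = D ^ rho n p" for p
  define dg where "dg m = (\<Sum>p\<in>Poly_Mapping.keys m. Poly_Mapping.lookup m p * e p)" for m
  define K where "K = Suc (Max (rho n ` idx n))"
  define B where "B = (\<Sum>w\<in>W. \<Sum>p\<in>idx n. \<bar>w p\<bar>)"
  define vt where "vt t p = (if p \<in> idx n then of_nat (t ^ e p) else (0::complex))" for t :: nat and p
  define R where "R = (\<Sum>m\<in>Poly_Mapping.keys P. monom (Poly_Mapping.lookup P m) (dg m))"
  have D2: "D \<ge> 2" by (simp add: D_def)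
  have keys_idx: "Poly_Mapping.keys m \<subseteq> idx n" if "m \<in> Poly_Mapping.keys P" for m
    using vars that by (auto simp: mpoly_in_vars_def)
  have lbound: "Poly_Mapping.lookup m i < D" if "m \<in> Poly_Mapping.keys P" for m i
  proof (cases "i \<in> Poly_Mapping.keys m")
    case True
    have "Poly_Mapping.lookup m i \<le> (\<Sum>i\<in>Poly_Mapping.keys m. Poly_Mapping.lookup m i)"
      using True by (intro member_le_sum) auto
    also have "\<dots> \<le> (\<Sum>m\<in>Poly_Mapping.keys P. \<Sum>i\<in>Poly_Mapping.keys m. Poly_Mapping.lookup m i)"
      using that by (intro member_le_sum) auto
    finally show ?thesis by (simp add: D_def)
  next
    case False then show ?thesis using D2 by (simp add: in_keys_iff)
  qed
  have Wb: "\<bar>w p\<bar> \<le> B" if "w \<in> W" for w p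
  proof (cases "p \<in> idx n")
    case True
    have "\<bar>w p\<bar> \<le> (\<Sum>p\<in>idx n. \<bar>w p\<bar>)"
      using True finite_idx by (intro member_le_sum) auto
    also have "\<dots> \<le> B" unfolding B_def
      using that W by (intro member_le_sum) (auto intro: sum_nonneg)
    finally show ?thesis .
  next
    case False
    then have "w p = 0" using that W by (cases p) (auto simp: Z0_def)
    moreover have "B \<ge> 0" unfolding B_def by (intro sum_nonneg) auto
    ultimately show ?thesis by simp
  qed
  have e_mono: "e p < e q" if "rho n p < rho n q" for p q
    unfolding e_def using that D2 by (intro power_strict_increasing) auto
  have inS: "vt t \<in> S_W n W" if t: "int t \<ge> 2*B + 2" for t
    unfolding S_W_def
  proof
    fix w assume w: "w \<in> W"
    define u where "u p = vt t p + of_int (w p)" for p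
    have w0: "w p = 0" if "p \<notin> idx n" for p using w W that by (cases p) (auto simp: Z0_def)
    have uv: "vt t = (\<lambda>p. u p - of_int (w p))" by (simp add: u_def)
    have "u \<in> std_pts n"
      unfolding std_pts_def
    proof (intro CollectI conjI allI impI)
      show "u \<in> pts n" by (auto simp: pts_def u_def vt_def w0)
    next
      fix i k assume ik: "1 \<le> i \<and> i < k \<and> k \<le> n"
      have in1: "(k,i) \<in> idx n" "(k-1,i) \<in> idx n" "(k,i+1) \<in> idx n" using ik by (auto simp: idx_def)
      have o1: "e (k-1,i) < e (k,i)" using rho_ord1[of i k n] ik e_mono by auto
      have o2: "e (k,i+1) < e (k-1,i)" using rho_ord2[of i k n] ik e_mono by auto
      obtain m where m: "0 < m" "(of_nat (t^e (k,i)) + of_int (w (k,i))) - (of_nat (t^e (k-1,i)) + of_int (w (k-1,i))) = (of_nat m :: complex)"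
        using cplx_diff[OF pos_diff[OF o1 t Wb[OF w] Wb[OF w]]] by blast
      show "\<exists>m::nat. u (k,i) - u (k-1,i) = of_nat m"
        using m in1 by (auto simp: u_def vt_def)
      obtain m' where m': "0 < m'" "(of_nat (t^e (k-1,i)) + of_int (w (k-1,i))) - (of_nat (t^e (k,i+1)) + of_int (w (k,i+1))) = (of_nat m' :: complex)"
        using cplx_diff[OF pos_diff[OF o2 t Wb[OF w] Wb[OF w]]] by blast
      show "\<exists>m::nat. 0 < m \<and> u (k-1,i) - u (k,i+1) = of_nat m"
        using m' in1 by (auto simp: u_def vt_def)
    qed
    then show "vt t \<in> std_shift n w" unfolding std_shift_def uv by blast
  qed
  have Xm_vt: "Xm m (vt t) = of_nat t ^ dg m" if "m \<in> Poly_Mapping.keys P" for m t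
  proof -
    have "Xm m (vt t) = (\<Prod>p\<in>Poly_Mapping.keys m. (of_nat t :: complex) ^ (Poly_Mapping.lookup m p * e p))"
      unfolding Xm_def using keys_idx[OF that]
      by (intro prod.cong) (auto simp: vt_def power_mult[symmetric] mult.commute)
    also have "\<dots> = of_nat t ^ dg m" by (simp add: dg_def power_sum)
    finally show ?thesis .
  qed
  have polyR: "poly R (of_nat t) = mpeval P (vt t)" for t
    by (simp add: R_def mpeval_def poly_sum poly_monom Xm_def[symmetric] Xm_vt cong: sum.cong)
  have R0: "R = 0"
  proof (rule ccontr)
    assume "R \<noteq> 0"
    hence fin: "finite {x. poly R x = 0}" by (rule poly_roots_finite)
    define T where "T = nat (2*B+2)"
    have "of_nat ` {T..} \<subseteq> {x. poly R x = 0}"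
    proof
      fix x assume "x \<in> (of_nat ` {T..} :: complex set)"
      then obtain t where "x = of_nat t" "t \<ge> T" by auto
      moreover have "int t \<ge> 2*B+2" using \<open>t \<ge> T\<close> unfolding T_def by linarith
      ultimately show "x \<in> {x. poly R x = 0}" using polyR inS zero by auto
    qed
    moreover have "infinite (of_nat ` {T..} :: complex set)"
    proof
      assume "finite (of_nat ` {T..} :: complex set)"
      hence "finite {T..}" by (rule finite_imageD) (auto intro: inj_onI)
      thus False using infinite_Ici by blast
    qed
    ultimately show False using fin finite_subset by blast
  qed
  define G :: "((nat \<times> nat) \<Rightarrow>\<^sub>0 nat) \<Rightarrow> nat \<Rightarrow> nat" where "G m j = (if j \<in> rho n ` idx n then Poly_Mapping.lookup m (inv_into (idx n) (rho n) j) else 0)" for m j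
  have dgG: "dg m = (\<Sum>j<K. G m j * D^j)" if "m \<in> Poly_Mapping.keys P" for m
  proof -
    have "dg m = (\<Sum>p\<in>idx n. Poly_Mapping.lookup m p * D ^ rho n p)"
      unfolding dg_def e_def using keys_idx[OF that] finite_idx
      by (intro sum.mono_neutral_left) (auto simp: in_keys_iff)
    also have "\<dots> = (\<Sum>p\<in>idx n. G m (rho n p) * D ^ rho n p)"
      by (intro sum.cong) (auto simp: G_def inv_into_f_f[OF rho_inj])
    also have "\<dots> = (\<Sum>j\<in>rho n ` idx n. G m j * D^j)"
      by (simp add: sum.reindex[OF rho_inj])
    also have "\<dots> = (\<Sum>j<K. G m j * D^j)"
    proof (intro sum.mono_neutral_left)
      show "rho n ` idx n \<subseteq> {..<K}"
        using finite_idx by (auto simp: K_def le_imp_less_Suc)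
    qed (auto simp: G_def)
    finally show ?thesis .
  qed
  have dg_inj: "m1 = m2" if "m1 \<in> Poly_Mapping.keys P" "m2 \<in> Poly_Mapping.keys P" "dg m1 = dg m2" for m1 m2
  proof (rule poly_mapping_eqI)
    fix p
    show "Poly_Mapping.lookup m1 p = Poly_Mapping.lookup m2 p"
    proof (cases "p \<in> idx n")
      case True
      have Gb: "\<forall>j<K. G m j < D" if "m \<in> Poly_Mapping.keys P" for m
        using lbound[OF that] D2 by (auto simp: G_def)
      have "rho n p < K" using True finite_idx by (auto simp: K_def le_imp_less_Suc)
      hence "G m1 (rho n p) = G m2 (rho n p)"
        using digits_unique[OF Gb[OF that(1)] Gb[OF that(2)]] dgG that by auto
      thus ?thesis using True by (simp add: G_def inv_into_f_f[OF rho_inj])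
    next
      case False
      have "p \<notin> Poly_Mapping.keys m1" "p \<notin> Poly_Mapping.keys m2"
        using keys_idx[OF that(1)] keys_idx[OF that(2)] False by auto
      thus ?thesis by (simp add: in_keys_iff)
    qed
  qed
  show "P = 0"
  proof (rule ccontr)
    assume "P \<noteq> 0"
    then obtain m0 where m0: "m0 \<in> Poly_Mapping.keys P"
      using keys_eq_empty by blast
    have "coeff R (dg m0) = (\<Sum>m\<in>Poly_Mapping.keys P. if m = m0 then Poly_Mapping.lookup P m else 0)"
      unfolding R_def coeff_sum coeff_monom
      by (intro sum.cong) (use dg_inj m0 in auto)
    also have "\<dots> = Poly_Mapping.lookup P m0" using m0 by simp
    finally have "Poly_Mapping.lookup P m0 = 0" using R0 by simp
    thus False using m0 by (simp add: in_keys_iff)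
  qed
qed

theorem mainTheorem1:
  fixes n :: nat and W :: "(nat \<times> nat \<Rightarrow> int) set" and P Q :: mpoly
  assumes "n \<ge> 2"
    and "W \<subseteq> Z0 n" and "finite W" and "W \<noteq> {}"
    and "mpoly_in_vars n P" and "mpoly_in_vars n Q" and "Q \<noteq> 0"
    and "\<forall>v \<in> S_W n W. no_pole_at n P Q v"
    and "\<forall>v \<in> S_W n W. ratfun_val_zero n P Q v"
  shows "P = 0"
proof (rule dense[OF assms(2,3,5)])
  show "\<forall>v \<in> S_W n W. mpeval P v = 0"
  proof
    fix v assume "v \<in> S_W n W"
    then obtain P' Q' where h: "P * Q' = P' * Q" "mpeval Q' v \<noteq> 0" "mpeval P' v = 0"
      using assms(9) by (auto simp: ratfun_val_zero_def same_ratfun_def)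
    have "mpeval P v * mpeval Q' v = mpeval P' v * mpeval Q v"
      using h(1) by (metis mpeval_mult)
    thus "mpeval P v = 0" using h(2,3) by simp
  qed
qed

end
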